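(* Let $g\geq 1$. For any algebra morphism (representation) $\mathbb{Z}[\mathbb{H}_g]\to M_d(\mathbb{C})$, there exist integers $N,k\geq 1$ such that $(\sigma^{2N}-1)^k$ lies in its kernel. In particular $\mathbb{Z}[\mathbb{H}_g]$ admits no faithful finite-dimensional complex representation.
   Context: $\mathbb{H}_g$ is the Heisenberg group with presentation $\langle a_1,b_1,\dots,a_g,b_g,\sigma \mid [a_i,a_j],[b_i,b_j],[\sigma,a_i],[\sigma,b_i],[a_i,b_j]\sigma^{-2\delta_{ij}}\rangle$, where $\delta_{ij}$ is the Kronecker symbol. *)

theory Defs
  imports "Jordan_Normal_Form.Matrix"
begin

definition inv_pair :: "nat \<Rightarrow> complex mat \<Rightarrow> complex mat \<Rightarrow> bool" where
  "inv_pair d X Y \<longleftrightarrow> X \<in> carrier_mat d d \<and> Y \<in> carrier_mat d d \<and>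
     X * Y = 1\<^sub>m d \<and> Y * X = 1\<^sub>m d"

definition comm_mat :: "complex mat \<Rightarrow> complex mat \<Rightarrow> complex mat \<Rightarrow> complex mat \<Rightarrow> complex mat" where
  "comm_mat X Xinv Y Yinv = X * Y * Xinv * Yinv"

text \<open>A representation of Z[H_g] in M_d(C): by the universal properties of group rings and of
  group presentations, it is the same as invertible matrices A_i, B_i (i < g; generators
  a_1..a_g, b_1..b_g indexed by 0..g-1) and S (for sigma), satisfying the defining relations
  of H_g.\<close>
definition heis_rep ::
  "nat \<Rightarrow> nat \<Rightarrow> (nat \<Rightarrow> complex mat) \<Rightarrow> (nat \<Rightarrow> complex mat) \<Rightarrow> (nat \<Rightarrow> complex mat)
     \<Rightarrow> (nat \<Rightarrow> complex mat) \<Rightarrow> complex mat \<Rightarrow> complex mat \<Rightarrow> bool" where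
  "heis_rep g d A Ainv B Binv S Sinv \<longleftrightarrow>
     (\<forall>i<g. inv_pair d (A i) (Ainv i) \<and> inv_pair d (B i) (Binv i)) \<and> inv_pair d S Sinv \<and>
     (\<forall>i<g. \<forall>j<g. comm_mat (A i) (Ainv i) (A j) (Ainv j) = 1\<^sub>m d) \<and>
     (\<forall>i<g. \<forall>j<g. comm_mat (B i) (Binv i) (B j) (Binv j) = 1\<^sub>m d) \<and>
     (\<forall>i<g. comm_mat S Sinv (A i) (Ainv i) = 1\<^sub>m d) \<and>
     (\<forall>i<g. comm_mat S Sinv (B i) (Binv i) = 1\<^sub>m d) \<and>
     (\<forall>i<g. \<forall>j<g. comm_mat (A i) (Ainv i) (B j) (Binv j) * (if i = j then Sinv ^\<^sub>m 2 else 1\<^sub>m d) = 1\<^sub>m d)"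

end

theory Submission imports Defs "Jordan_Normal_Form.Schur_Decomposition" begin

lemma mult_entry:
  assumes "A \<in> carrier_mat n n" "B \<in> carrier_mat n n" "i < n" "j < n"
  shows "(A * B) $$ (i,j) = (\<Sum>k<n. A $$ (i,k) * B $$ (k,j))"
  using assms by (simp add: scalar_prod_def lessThan_atLeast0)

lemma sum_single_nz:
  fixes f :: "nat \<Rightarrow> 'a::comm_monoid_add"
  assumes "j < n" "\<And>k. k < n \<Longrightarrow> k \<noteq> j \<Longrightarrow> f k = 0"
  shows "(\<Sum>k<n. f k) = f j"
  using assms by (subst sum.remove[of _ j]) (auto intro!: sum.neutral)

lemma pow_mat_add:
  assumes "(A :: 'a::semiring_1 mat) \<in> carrier_mat n n"
  shows "A ^\<^sub>m (a + b) = A ^\<^sub>m a * A ^\<^sub>m b"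
  using assms
proof (induction b)
  case 0 then show ?case by simp
next
  case (Suc b)
  have "A ^\<^sub>m (a + Suc b) = (A ^\<^sub>m a * A ^\<^sub>m b) * A" using Suc by simp
  also have "\<dots> = A ^\<^sub>m a * (A ^\<^sub>m b * A)"
    using Suc.prems by (intro assoc_mult_mat) auto
  finally show ?case by simp
qed

lemma pow_mat_mult:
  assumes "(A :: 'a::semiring_1 mat) \<in> carrier_mat n n"
  shows "A ^\<^sub>m (a * b) = (A ^\<^sub>m a) ^\<^sub>m b"
  using assms
proof (induction b)
  case 0 then show ?case by simp
next
  case (Suc b)
  have "A ^\<^sub>m (a * Suc b) = A ^\<^sub>m (a * b + a)" by (simp add: add.commute)
  also have "\<dots> = A ^\<^sub>m (a * b) * A ^\<^sub>m a" using pow_mat_add[OF Suc.prems] by blast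
  finally show ?case using Suc by simp
qed

lemma upper_pow:
  assumes U: "U \<in> carrier_mat n n" and ut: "upper_triangular U"
  shows "upper_triangular (U ^\<^sub>m k) \<and> (\<forall>i<n. (U ^\<^sub>m k) $$ (i,i) = U $$ (i,i) ^ k)"
proof (induction k)
  case 0 then show ?case using U by (auto simp: upper_triangular_def)
next
  case (Suc k)
  have Uk: "U ^\<^sub>m k \<in> carrier_mat n n" using U by simp
  have utk: "\<And>i j. i < n \<Longrightarrow> j < i \<Longrightarrow> (U ^\<^sub>m k) $$ (i,j) = 0"
    using Suc.IH Uk by (auto simp: upper_triangular_def)
  have utU: "\<And>i j. i < n \<Longrightarrow> j < i \<Longrightarrow> U $$ (i,j) = 0"
    using ut U by (auto simp: upper_triangular_def)
  have 1: "upper_triangular (U ^\<^sub>m Suc k)"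
    unfolding upper_triangular_def
  proof (intro allI impI)
    fix i j assume i: "i < dim_row (U ^\<^sub>m Suc k)" and j: "j < i"
    have i': "i < n" using i U by simp
    have "(U ^\<^sub>m Suc k) $$ (i,j) = (\<Sum>l<n. (U ^\<^sub>m k) $$ (i,l) * U $$ (l,j))"
      using mult_entry[OF Uk U i'] i' j by simp
    also have "\<dots> = 0"
    proof (rule sum.neutral, intro ballI)
      fix l assume "l \<in> {..<n}"
      then show "(U ^\<^sub>m k) $$ (i,l) * U $$ (l,j) = 0"
        using utk[of i l] utU[of l j] i' j by (cases "l < i") auto
    qed
    finally show "(U ^\<^sub>m Suc k) $$ (i,j) = 0" .
  qed
  have 2: "\<forall>i<n. (U ^\<^sub>m Suc k) $$ (i,i) = U $$ (i,i) ^ Suc k"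
  proof (intro allI impI)
    fix i assume i: "i < n"
    have "(U ^\<^sub>m Suc k) $$ (i,i) = (\<Sum>l<n. (U ^\<^sub>m k) $$ (i,l) * U $$ (l,i))"
      using mult_entry[OF Uk U i i] by simp
    also have "\<dots> = (U ^\<^sub>m k) $$ (i,i) * U $$ (i,i)"
      proof (rule sum_single_nz[OF i])
      fix l assume l: "l < n" "l \<noteq> i"
      show "(U ^\<^sub>m k) $$ (i,l) * U $$ (l,i) = 0"
      proof (cases "l < i")
        case True then show ?thesis using utk[OF i True] by simp
      next
        case False then have "i < l" using l by simp
        then show ?thesis using utU[OF l(1)] by simp
      qed
    qed
    finally show "(U ^\<^sub>m Suc k) $$ (i,i) = U $$ (i,i) ^ Suc k" using Suc.IH i by (simp add: power_commutes)
  qed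
  show ?case using 1 2 by blast
qed

lemma nilp_aux:
  assumes M: "M \<in> carrier_mat n n" and z: "\<And>i j. i < n \<Longrightarrow> j \<le> i \<Longrightarrow> M $$ (i,j) = 0"
  shows "\<forall>i<n. \<forall>j<n. j < i + k \<longrightarrow> (M ^\<^sub>m k) $$ (i,j) = 0"
proof (induction k)
  case 0 then show ?case using M by auto
next
  case (Suc k)
  have Mk: "M ^\<^sub>m k \<in> carrier_mat n n" using M by simp
  show ?case
  proof (intro allI impI)
    fix i j assume i: "i < n" and j: "j < n" and ij: "j < i + Suc k"
    have "(M ^\<^sub>m Suc k) $$ (i,j) = (\<Sum>l<n. (M ^\<^sub>m k) $$ (i,l) * M $$ (l,j))"
      using mult_entry[OF Mk M i j] by simp
    also have "\<dots> = 0"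
    proof (rule sum.neutral, intro ballI)
      fix l assume l: "l \<in> {..<n}"
      show "(M ^\<^sub>m k) $$ (i,l) * M $$ (l,j) = 0"
        using Suc.IH z[of l j] i j l ij by (cases "l < i + k") auto
    qed
    finally show "(M ^\<^sub>m Suc k) $$ (i,j) = 0" .
  qed
qed

lemma nilp:
  assumes M: "M \<in> carrier_mat n n" and z: "\<And>i j. i < n \<Longrightarrow> j \<le> i \<Longrightarrow> M $$ (i,j) = 0"
  shows "M ^\<^sub>m Suc n = 0\<^sub>m n n"
  using nilp_aux[OF M z, of "Suc n"] M by (intro eq_matI) auto


lemma sylv:
  assumes U: "U \<in> carrier_mat n n" and X: "X \<in> carrier_mat n n"
    and ut: "upper_triangular U" and mn: "m \<le> n"
    and dl: "\<And>i. i < m \<Longrightarrow> U $$ (i,i) = lam"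
    and dn: "\<And>i. m \<le> i \<Longrightarrow> i < n \<Longrightarrow> U $$ (i,i) \<noteq> lam"
    and c: "X * U = U * X"
  shows "\<And>i j. m \<le> i \<Longrightarrow> i < n \<Longrightarrow> j < m \<Longrightarrow> X $$ (i,j) = (0::'a::field)"
proof -
  have utU: "\<And>i j. i < n \<Longrightarrow> j < i \<Longrightarrow> U $$ (i,j) = 0"
    using ut U by (auto simp: upper_triangular_def)
  have main: "\<forall>i j. m \<le> i \<longrightarrow> i < n \<longrightarrow> j < m \<longrightarrow> j + (n - i) = s \<longrightarrow> X $$ (i,j) = 0" for s
  proof (induction s rule: less_induct)
    case (less s)
    show ?case
    proof (intro allI impI)
      fix i j assume i1: "m \<le> i" and i2: "i < n" and j: "j < m" and s: "j + (n - i) = s"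
      have jn: "j < n" using j mn by simp
      have "(X * U) $$ (i,j) = (\<Sum>l<n. X $$ (i,l) * U $$ (l,j))"
        using mult_entry[OF X U i2 jn] .
      also have "\<dots> = X $$ (i,j) * U $$ (j,j)"
      proof (rule sum_single_nz[OF jn])
        fix l assume l: "l < n" "l \<noteq> j"
        show "X $$ (i,l) * U $$ (l,j) = 0"
        proof (cases "l < j")
          case True
          then have "X $$ (i,l) = 0" using less.IH[of "l + (n - i)"] i1 i2 j s by auto
          then show ?thesis by simp
        next
          case False then have "j < l" using l by simp
          then show ?thesis using utU[OF l(1)] by simp
        qed
      qed
      finally have e1: "(X * U) $$ (i,j) = X $$ (i,j) * lam" using dl[OF j] by simp
      have "(U * X) $$ (i,j) = (\<Sum>l<n. U $$ (i,l) * X $$ (l,j))"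
        using mult_entry[OF U X i2 jn] .
      also have "\<dots> = U $$ (i,i) * X $$ (i,j)"
      proof (rule sum_single_nz[OF i2])
        fix l assume l: "l < n" "l \<noteq> i"
        show "U $$ (i,l) * X $$ (l,j) = 0"
        proof (cases "l < i")
          case True
          then show ?thesis using utU[OF i2 True] by simp
        next
          case False then have "i < l" using l by simp
          then have "X $$ (l,j) = 0" using less.IH[of "j + (n - l)"] i1 l(1) j s by auto
          then show ?thesis by simp
        qed
      qed
      finally have e2: "(U * X) $$ (i,j) = U $$ (i,i) * X $$ (i,j)" .
      have eq: "X $$ (i,j) * lam = U $$ (i,i) * X $$ (i,j)"
        by (simp only: e1[symmetric] e2[symmetric] c)
      have "(lam - U $$ (i,i)) * X $$ (i,j) = lam * X $$ (i,j) - U $$ (i,i) * X $$ (i,j)"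
        by (rule left_diff_distrib)
      also have "\<dots> = 0" using eq by (simp add: mult.commute)
      finally have "(lam - U $$ (i,i)) * X $$ (i,j) = 0" .
      moreover have "lam - U $$ (i,i) \<noteq> 0" using dn[OF i1 i2] by simp
      ultimately show "X $$ (i,j) = 0" by simp
    qed
  qed
  fix i j assume "m \<le> i" "i < n" "j < m"
  then show "X $$ (i,j) = 0" using main by blast
qed

definition tlm :: "nat \<Rightarrow> 'a mat \<Rightarrow> 'a mat" where
  "tlm m X = mat m m (\<lambda>(i,j). X $$ (i,j))"

lemma tlm_carrier[simp]: "tlm m X \<in> carrier_mat m m"
  by (simp add: tlm_def)

lemma tlm_mult:
  assumes X: "X \<in> carrier_mat n n" and Y: "Y \<in> carrier_mat n n" and mn: "m \<le> n"
    and z: "\<And>k j. m \<le> k \<Longrightarrow> k < n \<Longrightarrow> j < m \<Longrightarrow> Y $$ (k,j) = (0::'a::comm_ring_1)"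
  shows "tlm m (X * Y) = tlm m X * tlm m Y"
proof (rule eq_matI)
  fix i j assume i: "i < dim_row (tlm m X * tlm m Y)" and j: "j < dim_col (tlm m X * tlm m Y)"
  then have i': "i < m" and j': "j < m" by (auto simp: tlm_def)
  have "tlm m (X * Y) $$ (i,j) = (\<Sum>k<n. X $$ (i,k) * Y $$ (k,j))"
    using mult_entry[OF X Y, of i j] i' j' mn by (simp add: tlm_def)
  also have "\<dots> = (\<Sum>k<m. X $$ (i,k) * Y $$ (k,j))"
  proof -
    have "(\<Sum>k<n. X $$ (i,k) * Y $$ (k,j)) = (\<Sum>k<m. X $$ (i,k) * Y $$ (k,j)) + (\<Sum>k\<in>{m..<n}. X $$ (i,k) * Y $$ (k,j))"
      using mn by (simp add: lessThan_atLeast0 sum.atLeastLessThan_concat)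
    moreover have "(\<Sum>k\<in>{m..<n}. X $$ (i,k) * Y $$ (k,j)) = 0"
      using z j' by (intro sum.neutral) auto
    ultimately show ?thesis by simp
  qed
  also have "\<dots> = (tlm m X * tlm m Y) $$ (i,j)"
    using mult_entry[of "tlm m X" m "tlm m Y" i j] i' j' by (simp add: tlm_def)
  finally show "tlm m (X * Y) $$ (i,j) = (tlm m X * tlm m Y) $$ (i,j)" .
qed (auto simp: tlm_def)

lemma tlm_one: "m \<le> n \<Longrightarrow> tlm m (1\<^sub>m n) = 1\<^sub>m m"
  by (intro eq_matI) (auto simp: tlm_def)

lemma det_tlm_upper:
  fixes U :: "'a::comm_ring_1 mat"
  assumes U: "U \<in> carrier_mat n n" and ut: "upper_triangular U" and mn: "m \<le> n"
    and dl: "\<And>i. i < m \<Longrightarrow> U $$ (i,i) = lam"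
  shows "det (tlm m U) = lam ^ m"
proof -
  have "upper_triangular (tlm m U)"
    using ut U mn by (auto simp: upper_triangular_def tlm_def)
  then have "det (tlm m U) = prod_list (diag_mat (tlm m U))"
    by (rule det_upper_triangular[OF _ tlm_carrier])
  also have "diag_mat (tlm m U) = map (\<lambda>i. lam) [0..<m]"
    unfolding diag_mat_def by (simp add: tlm_def dl)
  also have "\<dots> = replicate m lam" by (simp add: map_replicate_const)
  finally show ?thesis by simp
qed


lemma schur_ex:
  assumes T: "(T::complex mat) \<in> carrier_mat d d" and cp: "char_poly T = (\<Prod>a\<leftarrow>es. [:-a,1:])"
  shows "\<exists>U P Q. U \<in> carrier_mat d d \<and> P \<in> carrier_mat d d \<and> Q \<in> carrier_mat d d \<and>
    P * Q = 1\<^sub>m d \<and> Q * P = 1\<^sub>m d \<and> T = P * U * Q \<and> upper_triangular U \<and> diag_mat U = es"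
proof -
  obtain U P Q where sd: "schur_decomposition T es = (U,P,Q)" by (metis prod_cases3)
  from schur_decomposition[OF T cp sd] T show ?thesis
    unfolding similar_mat_wit_def Let_def by auto
qed

lemma conj_mult:
  fixes P :: "'a::comm_ring_1 mat"
  assumes "P \<in> carrier_mat d d" "Q \<in> carrier_mat d d" "P * Q = 1\<^sub>m d"
    "X \<in> carrier_mat d d" "Y \<in> carrier_mat d d"
  shows "(Q * X * P) * (Q * Y * P) = Q * (X * Y) * P"
proof -
  have c: "P * (Q * Z) = Z" if "Z \<in> carrier_mat d d" for Z
  proof -
    have "P * (Q * Z) = (P * Q) * Z" using assms that by (intro assoc_mult_mat[symmetric]) auto
    also have "\<dots> = 1\<^sub>m d * Z" using assms by simp
    also have "\<dots> = Z" using that by (rule left_mult_one_mat)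
    finally show ?thesis .
  qed
  have cQX: "Q * X \<in> carrier_mat d d" using assms by (meson mult_carrier_mat)
  have cQYP: "Q * Y * P \<in> carrier_mat d d" using assms by (meson mult_carrier_mat)
  have e: "Q * Y * P = Q * (Y * P)" using assms by (intro assoc_mult_mat) auto
  have cYP: "Y * P \<in> carrier_mat d d" using assms by (meson mult_carrier_mat)
  have "(Q * X * P) * (Q * Y * P) = Q * X * (P * (Q * Y * P))"
    by (rule assoc_mult_mat[OF cQX assms(1) cQYP])
  also have "\<dots> = Q * X * (Y * P)" by (simp only: e c[OF cYP])
  also have "Q * X * (Y * P) = (Q * X * Y) * P"
    using assms cQX by (intro assoc_mult_mat[symmetric]) auto
  also have "Q * X * Y = Q * (X * Y)" using assms by (intro assoc_mult_mat) auto
  finally show ?thesis .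
qed

lemma core:
  fixes A B Ai Bi T :: "complex mat"
  assumes cA: "A \<in> carrier_mat d d" and cB: "B \<in> carrier_mat d d"
    and cAi: "Ai \<in> carrier_mat d d" and cBi: "Bi \<in> carrier_mat d d" and cT: "T \<in> carrier_mat d d"
    and AAi: "A * Ai = 1\<^sub>m d" and BBi: "B * Bi = 1\<^sub>m d"
    and rel: "A * B * Ai * Bi = T"
    and tA: "A * T = T * A" and tB: "B * T = T * B" and tAi: "Ai * T = T * Ai" and tBi: "Bi * T = T * Bi"
    and cp: "char_poly T = (\<Prod>a\<leftarrow>es. [:-a,1:])" and lam: "lam \<in> set es"
  shows "lam ^ fact d = 1"
proof -
  define es' where "es' = filter (\<lambda>x. x = lam) es @ filter (\<lambda>x. x \<noteq> lam) es"
  have "mset es' = mset es" by (simp add: es'_def)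
  then have "(\<Prod>a\<leftarrow>es'. [:-a,1:]) = (\<Prod>a\<leftarrow>es. [:-a,1:])"
    by (metis mset_map prod_mset_prod_list)
  with cp have cp': "char_poly T = (\<Prod>a\<leftarrow>es'. [:-a,1:])" by simp
  from schur_ex[OF cT cp'] obtain U P Q where
    cU: "U \<in> carrier_mat d d" and cP: "P \<in> carrier_mat d d" and cQ: "Q \<in> carrier_mat d d"
    and PQ: "P * Q = 1\<^sub>m d" and QP: "Q * P = 1\<^sub>m d" and TU: "T = P * U * Q"
    and ut: "upper_triangular U" and dg: "diag_mat U = es'" by blast
  define m where "m = length (filter (\<lambda>x. x = lam) es)"
  have len: "length es' = d" using dg cU unfolding diag_mat_def by auto
  have md: "m \<le> d" using len unfolding m_def es'_def by simp
  have m1: "1 \<le> m" using lam unfolding m_def by (simp add: Suc_le_eq filter_empty_conv length_greater_0_conv)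
  have diag: "\<And>i. i < d \<Longrightarrow> U $$ (i,i) = es' ! i"
    using cU by (simp add: dg[symmetric] diag_mat_def)
  have dl: "\<And>i. i < m \<Longrightarrow> U $$ (i,i) = lam"
  proof -
    fix i assume i: "i < m"
    then have "es' ! i = filter (\<lambda>x. x = lam) es ! i" unfolding es'_def m_def by (simp add: nth_append)
    also have "\<dots> = lam" using i unfolding m_def by (metis (mono_tags) mem_Collect_eq nth_mem set_filter)
    finally show "U $$ (i,i) = lam" using diag[of i] i md by simp
  qed
  have dn: "\<And>i. m \<le> i \<Longrightarrow> i < d \<Longrightarrow> U $$ (i,i) \<noteq> lam"
  proof -
    fix i assume i: "m \<le> i" "i < d"
    then have "es' ! i = filter (\<lambda>x. x \<noteq> lam) es ! (i - m)" unfolding es'_def m_def by (simp add: nth_append)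
    moreover have "i - m < length (filter (\<lambda>x. x \<noteq> lam) es)" using i len unfolding es'_def m_def by simp
    ultimately have "es' ! i \<noteq> lam" by (metis (mono_tags) mem_Collect_eq nth_mem set_filter)
    then show "U $$ (i,i) \<noteq> lam" using diag[of i] i by simp
  qed
  define cj where "cj X = Q * X * P" for X
  have cjc: "X \<in> carrier_mat d d \<Longrightarrow> cj X \<in> carrier_mat d d" for X using cP cQ unfolding cj_def by simp
  have cjm: "X \<in> carrier_mat d d \<Longrightarrow> Y \<in> carrier_mat d d \<Longrightarrow> cj X * cj Y = cj (X * Y)" for X Y
    unfolding cj_def using conj_mult[OF cP cQ PQ] by blast
  have cjT: "cj T = U"
  proof -
    have "cj T = (Q * P) * U * (Q * P)" unfolding cj_def TU using cP cQ cU
      by (simp add: assoc_mult_mat[of _ d d _ d _ d])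
    then show ?thesis using QP cU by simp
  qed
  have cj1: "cj (1\<^sub>m d) = 1\<^sub>m d" unfolding cj_def using cP cQ QP by simp
  have comm: "X \<in> carrier_mat d d \<Longrightarrow> X * T = T * X \<Longrightarrow> cj X * U = U * cj X" for X
    using cjm[of X T] cjm[of T X] cT cjT by simp
  have ll: "X \<in> carrier_mat d d \<Longrightarrow> X * T = T * X \<Longrightarrow>
      (\<And>k j. m \<le> k \<Longrightarrow> k < d \<Longrightarrow> j < m \<Longrightarrow> cj X $$ (k,j) = 0)" for X
    using sylv[OF cU cjc ut md dl dn comm] by blast
  have tA': "cj A * U = U * cj A" and tB': "cj B * U = U * cj B" 
    and tAi': "cj Ai * U = U * cj Ai" and tBi': "cj Bi * U = U * cj Bi" 
    using comm cA cB cAi cBi tA tB tAi tBi by auto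
  note llA = ll[OF cA tA] and llB = ll[OF cB tB] and llAi = ll[OF cAi tAi] and llBi = ll[OF cBi tBi]
  have tmA: "tlm m (cj A) * tlm m (cj Ai) = 1\<^sub>m m"
  proof -
    have "tlm m (cj A) * tlm m (cj Ai) = tlm m (cj A * cj Ai)"
      using tlm_mult[OF cjc[OF cA] cjc[OF cAi] md llAi] by simp
    also have "cj A * cj Ai = 1\<^sub>m d" using cjm[OF cA cAi] AAi cj1 by simp
    finally show ?thesis using tlm_one[OF md] by simp
  qed
  have tmB: "tlm m (cj B) * tlm m (cj Bi) = 1\<^sub>m m"
  proof -
    have "tlm m (cj B) * tlm m (cj Bi) = tlm m (cj B * cj Bi)"
      using tlm_mult[OF cjc[OF cB] cjc[OF cBi] md llBi] by simp
    also have "cj B * cj Bi = 1\<^sub>m d" using cjm[OF cB cBi] BBi cj1 by simp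
    finally show ?thesis using tlm_one[OF md] by simp
  qed
  have prod: "cj A * cj B * cj Ai * cj Bi = U"
    using cjm cA cB cAi cBi rel cjT by simp
  have c3: "cj A * cj B * cj Ai \<in> carrier_mat d d" using cjc cA cB cAi by (meson mult_carrier_mat)
  have c2: "cj A * cj B \<in> carrier_mat d d" using cjc cA cB by (meson mult_carrier_mat)
  have "tlm m U = tlm m (cj A * cj B * cj Ai) * tlm m (cj Bi)"
    using tlm_mult[OF c3 cjc[OF cBi] md llBi] prod by simp
  also have "tlm m (cj A * cj B * cj Ai) = tlm m (cj A * cj B) * tlm m (cj Ai)"
    using tlm_mult[OF c2 cjc[OF cAi] md llAi] by simp
  also have "tlm m (cj A * cj B) = tlm m (cj A) * tlm m (cj B)"
    using tlm_mult[OF cjc[OF cA] cjc[OF cB] md llB] by simp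
  finally have tU: "tlm m U = tlm m (cj A) * tlm m (cj B) * tlm m (cj Ai) * tlm m (cj Bi)" .
  have "lam ^ m = det (tlm m U)" using det_tlm_upper[OF cU ut md dl] by simp
  also have "\<dots> = det (tlm m (cj A)) * det (tlm m (cj B)) * det (tlm m (cj Ai)) * det (tlm m (cj Bi))"
    unfolding tU
    by (simp add: det_mult[OF mult_carrier_mat[OF mult_carrier_mat[OF tlm_carrier tlm_carrier] tlm_carrier] tlm_carrier]
        det_mult[OF mult_carrier_mat[OF tlm_carrier tlm_carrier] tlm_carrier] det_mult[OF tlm_carrier tlm_carrier])
  also have "\<dots> = (det (tlm m (cj A)) * det (tlm m (cj Ai))) * (det (tlm m (cj B)) * det (tlm m (cj Bi)))"
    by (simp add: ac_simps)
  also have "\<dots> = 1"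
    using arg_cong[OF tmA, of det] arg_cong[OF tmB, of det] by (simp add: det_mult[of _ m])
  finally have lm: "lam ^ m = 1" .
  from dvd_fact[OF m1 md] obtain r where "fact d = m * r" by (auto elim: dvdE)
  then show ?thesis using lm by (simp add: power_mult)
qed


lemma cancel_l:
  fixes X :: "'a::semiring_1 mat"
  assumes "X \<in> carrier_mat d d" "Y \<in> carrier_mat d d" "X * Y = 1\<^sub>m d" "Z \<in> carrier_mat d k"
  shows "X * (Y * Z) = Z"
proof -
  have "X * (Y * Z) = (X * Y) * Z" using assms by (intro assoc_mult_mat[symmetric]) auto
  then show ?thesis using assms by simp
qed

lemma comm_from:
  fixes X :: "'a::semiring_1 mat"
  assumes c: "X \<in> carrier_mat d d" "Xi \<in> carrier_mat d d" "Y \<in> carrier_mat d d" "Yi \<in> carrier_mat d d"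
    and i: "Xi * X = 1\<^sub>m d" "Yi * Y = 1\<^sub>m d"
    and h: "X * Y * Xi * Yi = 1\<^sub>m d"
  shows "X * Y = Y * X"
proof -
  have mc: "\<And>U V. U \<in> carrier_mat d d \<Longrightarrow> V \<in> carrier_mat d d \<Longrightarrow> U * V \<in> carrier_mat d d"
    by (meson mult_carrier_mat)
  have "(X * Y * Xi * Yi) * (Y * X) = X * Y"
    using c i mc by (simp add: assoc_mult_mat[of _ d d _ d _ d] cancel_l[of Yi d Y])
  then show ?thesis unfolding h using c mc by simp
qed

lemma comm_inv:
  fixes X :: "'a::semiring_1 mat"
  assumes c: "X \<in> carrier_mat d d" "Y \<in> carrier_mat d d" "Yi \<in> carrier_mat d d"
    and i: "Yi * Y = 1\<^sub>m d" "Y * Yi = 1\<^sub>m d" and h: "X * Y = Y * X"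
  shows "X * Yi = Yi * X"
proof -
  have mc: "\<And>U V. U \<in> carrier_mat d d \<Longrightarrow> V \<in> carrier_mat d d \<Longrightarrow> U * V \<in> carrier_mat d d"
    by (meson mult_carrier_mat)
  have h': "Y * (X * Z) = X * (Y * Z)" if "Z \<in> carrier_mat d d" for Z
  proof -
    have "Y * (X * Z) = (Y * X) * Z" using c that by (intro assoc_mult_mat[symmetric]) auto
    also have "\<dots> = (X * Y) * Z" using h by simp
    also have "\<dots> = X * (Y * Z)" using c that by (intro assoc_mult_mat) auto
    finally show ?thesis .
  qed
  have "X * Yi = Yi * (Y * (X * Yi))" by (rule sym[OF cancel_l[OF c(3) c(2) i(1) mc[OF c(1) c(3)]]])
  also have "Y * (X * Yi) = X" using h'[of Yi] c i by simp
  finally show ?thesis .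
qed

lemma comm_push:
  fixes X :: "'a::semiring_1 mat"
  assumes c: "X \<in> carrier_mat d d" "Y \<in> carrier_mat d d" "Z \<in> carrier_mat d d" and h: "X * Y = Y * X"
  shows "X * (Y * Z) = Y * (X * Z)"
proof -
  have "X * (Y * Z) = (X * Y) * Z" using c by (intro assoc_mult_mat[symmetric]) auto
  also have "\<dots> = (Y * X) * Z" using h by simp
  also have "\<dots> = Y * (X * Z)" using c by (intro assoc_mult_mat) auto
  finally show ?thesis .
qed

theorem mainTheorem4:
  fixes g d :: nat and A Ainv B Binv :: "nat \<Rightarrow> complex mat" and S Sinv :: "complex mat"
  assumes "g \<ge> 1"
    and "heis_rep g d A Ainv B Binv S Sinv"
  shows "\<exists>N k :: nat. N \<ge> 1 \<and> k \<ge> 1 \<and> (S ^\<^sub>m (2 * N) - 1\<^sub>m d) ^\<^sub>m k = 0\<^sub>m d d"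
proof -
  define a where "a = A 0"
  define ai where "ai = Ainv 0"
  define b where "b = B 0"
  define bi where "bi = Binv 0"
  have g0: "0 < g" using assms(1) by simp
  from assms(2) g0 have ia: "inv_pair d a ai" and ib: "inv_pair d b bi" and iS: "inv_pair d S Sinv"
    and hSA: "comm_mat S Sinv a ai = 1\<^sub>m d" and hSB: "comm_mat S Sinv b bi = 1\<^sub>m d"
    unfolding heis_rep_def a_def ai_def b_def bi_def by auto
  from assms(2) have h7: "\<forall>i<g. \<forall>j<g. comm_mat (A i) (Ainv i) (B j) (Binv j) *
       (if i = j then Sinv ^\<^sub>m 2 else 1\<^sub>m d) = 1\<^sub>m d"
    unfolding heis_rep_def by blast
  have hAB: "comm_mat a ai b bi * Sinv ^\<^sub>m 2 = 1\<^sub>m d"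
    using h7[rule_format, OF g0 g0] unfolding a_def ai_def b_def bi_def
    by (simp only: if_P[OF refl])
  from ia ib iS have ca: "a \<in> carrier_mat d d" and cai: "ai \<in> carrier_mat d d"
    and cb: "b \<in> carrier_mat d d" and cbi: "bi \<in> carrier_mat d d"
    and cS: "S \<in> carrier_mat d d" and cSi: "Sinv \<in> carrier_mat d d"
    and aai: "a * ai = 1\<^sub>m d" and aia: "ai * a = 1\<^sub>m d"
    and bbi: "b * bi = 1\<^sub>m d" and bib: "bi * b = 1\<^sub>m d"
    and SSi: "S * Sinv = 1\<^sub>m d" and SiS: "Sinv * S = 1\<^sub>m d"
    unfolding inv_pair_def by auto
  have mc: "\<And>U V. U \<in> carrier_mat d d \<Longrightarrow> V \<in> carrier_mat d d \<Longrightarrow> U * V \<in> carrier_mat d d"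
    by (meson mult_carrier_mat)
  have Sa: "S * a = a * S"
    by (rule comm_from[OF cS cSi ca cai SiS aia hSA[unfolded comm_mat_def]])
  have Sb: "S * b = b * S"
    by (rule comm_from[OF cS cSi cb cbi SiS bib hSB[unfolded comm_mat_def]])
  have Sai: "S * ai = ai * S" by (rule comm_inv[OF cS ca cai aia aai Sa])
  have Sbi: "S * bi = bi * S" by (rule comm_inv[OF cS cb cbi bib bbi Sb])
  define T where "T = S * S"
  have cT: "T \<in> carrier_mat d d" unfolding T_def using cS mc by simp
  have S2: "S ^\<^sub>m 2 = T" unfolding T_def using cS by (simp add: numeral_2_eq_2)
  have Si2: "Sinv ^\<^sub>m 2 = Sinv * Sinv" using cSi by (simp add: numeral_2_eq_2)
  have tc: "X * T = T * X" if cX: "X \<in> carrier_mat d d" and h: "S * X = X * S" for X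
  proof -
    have "T * X = S * (S * X)" unfolding T_def using cS cX by (intro assoc_mult_mat) auto
    also have "\<dots> = X * (S * S)" using comm_push[OF cS cX cS h] h by simp
    finally show ?thesis unfolding T_def by simp
  qed
  have rel: "a * b * ai * bi = T"
  proof -
    have r0: "a * b * ai * bi * (Sinv * Sinv) = 1\<^sub>m d" using hAB Si2 unfolding comm_mat_def by simp
    have "(a * b * ai * bi * (Sinv * Sinv)) * (S * S) = a * b * ai * bi"
      using ca cb cai cbi cS cSi mc SiS
      by (simp add: assoc_mult_mat[of _ d d _ d _ d] cancel_l[OF cSi cS SiS])
    then show ?thesis unfolding r0 T_def using cS mc by simp
  qed
  define N :: nat where "N = fact d"
  have N1: "N \<ge> 1" unfolding N_def by (simp add: fact_ge_1)
  obtain es where cp: "char_poly T = (\<Prod>a\<leftarrow>es. [:-a,1:])" and les: "length es = d"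
    using char_poly_factorized[OF cT] by blast
  have roots: "lam ^ N = 1" if "lam \<in> set es" for lam
    unfolding N_def
    by (rule core[OF ca cb cai cbi cT aai bbi rel tc[OF ca Sa] tc[OF cb Sb] tc[OF cai Sai] tc[OF cbi Sbi] cp that])
  from schur_ex[OF cT cp] obtain U P Q where
    cU: "U \<in> carrier_mat d d" and cP: "P \<in> carrier_mat d d" and cQ: "Q \<in> carrier_mat d d"
    and PQ: "P * Q = 1\<^sub>m d" and QP: "Q * P = 1\<^sub>m d" and TU: "T = P * U * Q"
    and ut: "upper_triangular U" and dg: "diag_mat U = es" by blast
  have diag: "\<And>i. i < d \<Longrightarrow> U $$ (i,i) = es ! i"
    using cU by (simp add: dg[symmetric] diag_mat_def)
  define M where "M = U ^\<^sub>m N - 1\<^sub>m d"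
  have cM: "M \<in> carrier_mat d d" unfolding M_def by (rule minus_carrier_mat) simp
  from upper_pow[OF cU ut, of N] have utN: "upper_triangular (U ^\<^sub>m N)"
    and dN: "\<And>i. i < d \<Longrightarrow> (U ^\<^sub>m N) $$ (i,i) = U $$ (i,i) ^ N" by auto
  have Mz: "M $$ (i,j) = 0" if "i < d" "j \<le> i" for i j
  proof (cases "j = i")
    case True
    have "es ! i \<in> set es" using that les by simp
    then show ?thesis using True that cU dN diag roots unfolding M_def by simp
  next
    case False
    then have "j < i" using that by simp
    then have "(U ^\<^sub>m N) $$ (i,j) = 0" using utN that cU unfolding upper_triangular_def by simp
    then show ?thesis using False that cU unfolding M_def by simp
  qed
  have M0: "M ^\<^sub>m Suc d = 0\<^sub>m d d" by (rule nilp[OF cM Mz])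
  have sw: "similar_mat_wit T U P Q" unfolding similar_mat_wit_def Let_def
    using cT cU cP cQ PQ QP TU by auto
  have TN: "T ^\<^sub>m N = P * U ^\<^sub>m N * Q" by (rule similar_mat_wit_pow_id[OF sw])
  have cUN: "U ^\<^sub>m N \<in> carrier_mat d d" using cU by simp
  have "P * M * Q = (P * U ^\<^sub>m N - P * 1\<^sub>m d) * Q"
    unfolding M_def using cP cUN by (simp add: mult_minus_distrib_mat[of _ d d])
  also have "\<dots> = P * U ^\<^sub>m N * Q - P * 1\<^sub>m d * Q"
    using cP cUN cQ by (intro minus_mult_distrib_mat[of _ d d]) (auto intro: mult_carrier_mat)
  also have "\<dots> = T ^\<^sub>m N - 1\<^sub>m d" using TN PQ cP by simp
  finally have PMQ: "T ^\<^sub>m N - 1\<^sub>m d = P * M * Q" by simp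
  have sw2: "similar_mat_wit (P * M * Q) M P Q" unfolding similar_mat_wit_def Let_def
    using cM cP cQ PQ QP mc by auto
  have "(T ^\<^sub>m N - 1\<^sub>m d) ^\<^sub>m Suc d = P * M ^\<^sub>m Suc d * Q"
    unfolding PMQ by (rule similar_mat_wit_pow_id[OF sw2])
  also have "\<dots> = 0\<^sub>m d d" unfolding M0 using cP cQ by simp
  finally have fin: "(T ^\<^sub>m N - 1\<^sub>m d) ^\<^sub>m Suc d = 0\<^sub>m d d" .
  have "S ^\<^sub>m (2 * N) = T ^\<^sub>m N" using pow_mat_mult[OF cS, of 2 N] S2 by simp
  then show ?thesis using fin N1 by (intro exI[of _ N] exI[of _ "Suc d"]) simp
qed

end
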